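(* Let $p,q$ be integers with $p\ge2$ and $0<q<p$, and let $D=D(g,f)$ be the recursive matrix with $g(x)=(1-p^2x)^{-q/p}$ and $f(x)=\dfrac{-x}{1-p^2x}$. Then for all integers $n\ge0$ and $m\ge0$, \[ D_{n,-m}=Q(p,q)_{n,m}=\frac{p^{2(n+m)}\,(q/p)_n\,\bigl((p-q)/p\bigr)_m}{(n+m)!}. \] That is, the matrix of $(p,q)$-super Patalan numbers forms the lower left quadrant ($n\ge0$, $k=-m\le0$) of $D$, with the column order reversed.
   Context: For power series $g(x)=\sum_{k\ge0}g_kx^k$ and $f(x)=\sum_{k\ge0}f_kx^k$ with $f_0=0$ and $f_1\ne0$, the recursive matrix $D(g,f)$ is the doubly infinite matrix with entries $D_{n,k}=[x^n]\bigl(g(x)f(x)^k\bigr)$ for all integers $n,k$, where for $k<0$, $f(x)^k$ denotes the multiplicative inverse of $f(x)^{-k}$ in the ring of formal Laurent series. The $(p,q)$-super Patalan numbers are $Q(p,q)_{n,m}=\frac{p^{2(n+m)}(q/p)_n((p-q)/p)_m}{(n+m)!}$ for $n,m\ge0$, where $(\alpha)_r=\alpha(\alpha+1)\cdots(\alpha+r-1)$ is the rising factorial with $(\alpha)_0=1$ (for $p=2,q=1$ these are the super Catalan numbers $\frac{(2n)!(2m)!}{n!\,m!\,(n+m)!}$). *)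

theory Defs
  imports "HOL-Computational_Algebra.Formal_Laurent_Series"
begin

definition recmat :: "'a::field fps \<Rightarrow> 'a fps \<Rightarrow> int \<Rightarrow> int \<Rightarrow> 'a" where
  "recmat g f n k = fls_nth (fps_to_fls g * (fps_to_fls f) powi k) n"

definition super_patalan :: "int \<Rightarrow> int \<Rightarrow> nat \<Rightarrow> nat \<Rightarrow> real" where
  "super_patalan p q n m =
     (real_of_int p) ^ (2 * (n + m)) * pochhammer (real_of_int q / real_of_int p) n
       * pochhammer (real_of_int (p - q) / real_of_int p) m / fact (n + m)"

text \<open>g(x) = (1 - p^2 x)^(-q/p), as the generalized binomial series.\<close>
definition patalan_g :: "int \<Rightarrow> int \<Rightarrow> real fps" where
  "patalan_g p q = fps_compose (fps_binomial (- (real_of_int q / real_of_int p)))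
                     (- (of_int (p^2) * fps_X))"

definition patalan_f :: "int \<Rightarrow> real fps" where
  "patalan_f p = - fps_X * inverse (1 - of_int (p^2) * fps_X)"

end

theory Submission imports Defs begin

lemma key_fls:
  fixes G H :: "real fps" and m :: nat
  assumes "H $ 0 \<noteq> 0"
  shows "fls_nth (fps_to_fls G * (fps_to_fls (fps_X * H)) powi (- int m)) (int n)
       = (G * (inverse H)^m) $ (n+m)"
proof -
  have inv: "inverse (fps_to_fls (fps_X * H)) = fls_X_inv * fps_to_fls (inverse H)"
  proof (rule inverse_unique)
    have "fps_to_fls (fps_X * H) * (fls_X_inv * fps_to_fls (inverse H))
       = (fls_X * fls_X_inv) * fps_to_fls (H * inverse H)"
      by (simp add: fls_times_fps_to_fls mult_ac)
    also have "\<dots> = 1" using assms by (simp add: fls_X_times_conv_shift fls_X_inv_times_conv_shift fls_times_fps_to_fls[symmetric] inverse_mult_eq_1 inverse_mult_eq_1')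
    finally show "fps_to_fls (fps_X * H) * (fls_X_inv * fps_to_fls (inverse H)) = 1" .
  qed
  have "(fps_to_fls (fps_X * H)) powi (- int m) = (fls_X_inv * fps_to_fls (inverse H))^m"
    by (simp only: power_int_minus power_int_of_nat flip: inv) (rule power_inverse[symmetric])
  also have "\<dots> = fls_shift (int m) (fps_to_fls (inverse H ^ m))"
    by (simp only: power_mult_distrib fps_to_fls_power fls_X_inv_power_times_conv_shift)
  finally have e: "(fps_to_fls (fps_X * H)) powi (- int m) = fls_shift (int m) (fps_to_fls (inverse H ^ m))" .
  have "fps_to_fls G * fls_shift (int m) (fps_to_fls (inverse H ^ m)) = fls_shift (int m) (fps_to_fls (G * inverse H ^ m))"
    by (simp only: fls_times_fps_to_fls fls_shifted_times_simps)
  then show ?thesis using e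
    by (simp only: recmat_def fls_shift_nth) (simp flip: of_nat_add)
qed

lemma coeff_part:
  fixes a c :: real and m N :: nat
  shows "(fps_compose (fps_binomial a) (- (fps_const c * fps_X)) * (1 - fps_const c * fps_X)^m) $ N
        = (a + of_nat m gchoose N) * (- c)^N"
proof -
  define Y :: "real fps" where "Y = fps_const (-c) * fps_X"
  have Y0: "Y $ 0 = 0" by (simp add: Y_def)
  have eY: "- (fps_const c * fps_X) = Y" by (simp add: Y_def fps_const_neg)
  have e1: "1 - fps_const c * fps_X = (1 + fps_X) oo Y"
    by (simp add: Y_def fps_compose_add_distrib fps_const_neg)
  have "(1 - fps_const c * fps_X)^m = fps_binomial (of_nat m) oo Y"
    by (simp add: e1 fps_compose_power[OF Y0] fps_binomial_of_nat)
  hence "fps_compose (fps_binomial a) (- (fps_const c * fps_X)) * (1 - fps_const c * fps_X)^m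
     = fps_binomial (a + of_nat m) oo Y"
    by (simp add: eY fps_compose_mult_distrib[OF Y0] fps_binomial_add_mult)
  then show ?thesis unfolding Y_def fps_compose_linear by simp
qed

lemma sgn_aux:
  fixes x y A B P F :: real
  assumes "x*x = 1" "y*y = 1"
  shows "x * (y * (x * A * B) / F) * (y * P) = P * B * A / F"
proof -
  have "x * (y * (x * A * B) / F) * (y * P) = (x*x)*(y*y)*(P * B * A / F)" by (simp add: algebra_simps)
  then show ?thesis using assms by simp
qed

lemma arith_part:
  fixes p q :: real and n m :: nat
  assumes "p \<noteq> 0"
  shows "(-1)^m * ((- (q/p) + of_nat m) gchoose (n+m)) * (- (p^2))^(n+m)
    = p ^ (2 * (n + m)) * pochhammer (q / p) n * pochhammer ((p - q) / p) m / fact (n + m)"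
proof -
  have pm: "pochhammer (q/p - of_nat m) m = (-1)^m * pochhammer ((p-q)/p) m"
  proof -
    have "pochhammer (q/p - of_nat m) m = pochhammer (- (of_nat m - q/p)) m" by simp
    also have "\<dots> = (-1)^m * pochhammer ((of_nat m - q/p) - of_nat m + 1) m"
      by (rule pochhammer_minus)
    also have "(of_nat m - q/p) - of_nat m + 1 = (p-q)/p" using assms by (simp add: field_simps)
    finally show ?thesis .
  qed
  have pp: "pochhammer (q/p - of_nat m) (m+n) = (-1)^m * pochhammer ((p-q)/p) m * pochhammer (q/p) n"
  proof -
    have "pochhammer (q/p - of_nat m) (m+n) = pochhammer (q/p - of_nat m) m * pochhammer (q/p - of_nat m + of_nat m) n"
      by (rule pochhammer_product')
    then show ?thesis using pm by simp
  qed
  have "((- (q/p) + of_nat m) gchoose (n+m)) = (-1)^(n+m) * pochhammer (q/p - of_nat m) (n+m) / fact (n+m)"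
    by (subst gbinomial_pochhammer) simp
  also have "\<dots> = (-1)^(n+m) * ((-1)^m * pochhammer ((p-q)/p) m * pochhammer (q/p) n) / fact (n+m)"
    by (simp only: add.commute[of n m] pp)
  finally have g: "((- (q/p) + of_nat m) gchoose (n+m)) = \<dots>" .
  have s: "(- (p^2))^(n+m) = (-1)^(n+m) * p^(2*(n+m))"
    by (subst power_minus) (simp only: power_mult)
  have ss: "((-1::real)^(n+m))^2 = 1" "((-1::real)^m)^2 = 1"
    by (simp_all add: power2_eq_square flip: power_add)
  show ?thesis unfolding g s
    using sgn_aux[OF ss(2)[unfolded power2_eq_square] ss(1)[unfolded power2_eq_square]] .
qed

theorem theorem4:
  fixes p q :: int
  assumes "p \<ge> 2" and "0 < q" and "q < p"
  shows "\<forall>n m :: nat. recmat (patalan_g p q) (patalan_f p) (int n) (- int m)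
           = super_patalan p q n m"
proof (intro allI)
  fix n m :: nat
  define c :: real where "c = real_of_int (p^2)"
  define H :: "real fps" where "H = - inverse (1 - fps_const c * fps_X)"
  have H0: "H $ 0 \<noteq> 0" by (simp add: H_def)
  have oc: "(of_int (p^2) :: real fps) = fps_const c" by (simp only: c_def fps_of_int)
  have fH: "patalan_f p = fps_X * H"
    unfolding patalan_f_def H_def oc by simp
  have iH: "inverse H = - (1 - fps_const c * fps_X)"
    by (simp add: H_def)
  have g: "patalan_g p q = fps_compose (fps_binomial (- (real_of_int q / real_of_int p))) (- (fps_const c * fps_X))"
    unfolding patalan_g_def oc ..
  have "recmat (patalan_g p q) (patalan_f p) (int n) (- int m)
      = (patalan_g p q * (inverse H)^m) $ (n+m)"
    unfolding recmat_def fH by (rule key_fls[OF H0])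
  also have "\<dots> = (-1)^m * ((patalan_g p q * (1 - fps_const c * fps_X)^m) $ (n+m))"
  proof -
    have e: "(- (1 - fps_const c * fps_X))^m = fps_const ((-1)^m) * (1 - fps_const c * fps_X)^m"
      by (induction m) (simp_all add: fps_const_neg[symmetric] fps_const_mult[symmetric] algebra_simps del: fps_const_neg fps_const_mult)
    show ?thesis unfolding iH e mult.left_commute[of _ "fps_const _"] fps_mult_left_const_nth ..
  qed
  also have "\<dots> = (-1)^m * ((- (real_of_int q / real_of_int p) + of_nat m gchoose (n+m)) * (- c)^(n+m))"
    unfolding g coeff_part ..
  also have "\<dots> = (-1)^m * ((- (real_of_int q / real_of_int p) + of_nat m) gchoose (n+m)) * (- (real_of_int p ^2))^(n+m)"
    by (simp add: c_def)
  also have "\<dots> = super_patalan p q n m"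
    unfolding super_patalan_def of_int_diff
    by (rule arith_part) (use assms in simp)
  finally show "recmat (patalan_g p q) (patalan_f p) (int n) (- int m) = super_patalan p q n m" .
qed

end
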